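(* For every real number $\epsilon>0$ and every fixed natural number $r\ge 2$, with probability tending to $1$ as $n\to\infty$, $$\chi\left(\widetilde{C}_{\mathrm{Hom}_p(K_r,\,G(n,\frac12))}\right)\leq \left(r+\frac{2}{r-1}+\epsilon\right)\log_2 n.$$
   Context: $G(n,p)$ is the random graph on labeled vertex set $[n]=\{1,\dots,n\}$ in which each edge appears independently with probability $p$. For graphs $F$ with $V(F)=[r]$ and $H$, the Hom-poset $\mathrm{Hom}_p(F,H)$ consists of all $r$-tuples $(A_1,\dots,A_r)$ of non-empty subsets of $V(H)$ such that for every edge $\{i,j\}$ of $F$ and every $x\in A_i$, $y\in A_j$, $\{x,y\}$ is an edge of $H$; it is ordered by $(A_1,\dots,A_r)\le(B_1,\dots,B_r)$ iff $A_i\subseteq B_i$ for all $i$. $K_r$ is the complete graph on $[r]$. The cyclic group $\mathbb{Z}_r=\{\omega^0=e,\omega,\dots,\omega^{r-1}\}$ acts on $\mathrm{Hom}_p(K_r,H)$ by cyclic shift: $\omega^i\cdot(A_1,\dots,A_r)=(A_{1+i},\dots,A_{r+i})$, indices taken modulo $r$ in $[r]$; this makes it a free $\mathbb{Z}_r$-poset. For a $G$-poset $P$ (order-preserving $G$-action) with $[x]=\{g\cdot x:g\in G\}$, the strong compatibility graph $\widetilde{C}_P$ has vertex set $P$, with $x,y$ adjacent if there is $g\in G\setminus\{e\}$ such that $x$ and $g\cdot y$ are comparable and $y\notin[x]$. $\chi$ is the chromatic number. *)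

theory Defs
  imports "HOL-Probability.Probability"
begin

definition vertex_pairs :: "nat \<Rightarrow> nat set set" where
  "vertex_pairs n = {{x, y} | x y. x \<in> {1..n} \<and> y \<in> {1..n} \<and> x \<noteq> y}"

definition all_graphs :: "nat \<Rightarrow> nat set set set" where
  "all_graphs n = Pow (vertex_pairs n)"

text \<open>G(n,1/2): each edge independently with probability 1/2, i.e. the uniform
  distribution on all labelled graphs on [n].\<close>

definition gnp_half :: "nat \<Rightarrow> nat set set pmf" where
  "gnp_half n = pmf_of_set (all_graphs n)"

text \<open>Hom-poset Hom_p(K_r, H) for H = (V, E). An r-tuple (A_1,...,A_r) is encoded
  0-based as a function A with A i for i < r, and A i = {} for i \<ge> r.\<close>

definition hom_Kr :: "nat \<Rightarrow> nat set \<Rightarrow> nat set set \<Rightarrow> (nat \<Rightarrow> nat set) set" where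
  "hom_Kr r V E = {A. (\<forall>i<r. A i \<noteq> {} \<and> A i \<subseteq> V) \<and> (\<forall>i. r \<le> i \<longrightarrow> A i = {}) \<and>
       (\<forall>i<r. \<forall>j<r. i \<noteq> j \<longrightarrow> (\<forall>x\<in>A i. \<forall>y\<in>A j. {x, y} \<in> E))}"

definition hom_le :: "nat \<Rightarrow> (nat \<Rightarrow> nat set) \<Rightarrow> (nat \<Rightarrow> nat set) \<Rightarrow> bool" where
  "hom_le r A B \<longleftrightarrow> (\<forall>i<r. A i \<subseteq> B i)"

definition cshift :: "nat \<Rightarrow> nat \<Rightarrow> (nat \<Rightarrow> nat set) \<Rightarrow> (nat \<Rightarrow> nat set)" where
  "cshift r k A = (\<lambda>i. if i < r then A ((i + k) mod r) else {})"

definition orbit :: "nat \<Rightarrow> (nat \<Rightarrow> nat set) \<Rightarrow> (nat \<Rightarrow> nat set) set" where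
  "orbit r A = {cshift r k A | k. k < r}"

definition strong_compat :: "nat \<Rightarrow> (nat \<Rightarrow> nat set) \<Rightarrow> (nat \<Rightarrow> nat set) \<Rightarrow> bool" where
  "strong_compat r x y \<longleftrightarrow>
     (\<exists>k. 1 \<le> k \<and> k < r \<and> (hom_le r x (cshift r k y) \<or> hom_le r (cshift r k y) x)) \<and>
     y \<notin> orbit r x"

definition chromatic_number :: "'a set \<Rightarrow> ('a \<Rightarrow> 'a \<Rightarrow> bool) \<Rightarrow> nat" where
  "chromatic_number V adj =
     (LEAST k. \<exists>c :: 'a \<Rightarrow> nat. (\<forall>v\<in>V. c v < k) \<and>
                  (\<forall>u\<in>V. \<forall>v\<in>V. adj u v \<longrightarrow> c u \<noteq> c v))"

end

theory Submission
  imports Defs "HOL-Real_Asymp.Real_Asymp"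
begin


definition psum :: "nat \<Rightarrow> (nat \<Rightarrow> nat set) \<Rightarrow> nat" where
  "psum r x = (\<Sum>i<r. card (x i))"

definition good :: "nat \<Rightarrow> nat \<Rightarrow> nat \<Rightarrow> nat set set \<Rightarrow> bool" where
  "good r T n E \<longleftrightarrow> (\<forall>x\<in>hom_Kr r {1..n} E. \<forall>j<r. (\<forall>i<r. card (x i) \<le> card (x j)) \<longrightarrow>
      (\<Sum>i\<in>{i. i<r \<and> i\<noteq>j}. card (x i)) < T)"

lemma hom_sub: "x \<in> hom_Kr r V E \<Longrightarrow> i < r \<Longrightarrow> x i \<subseteq> V"
  unfolding hom_Kr_def by auto

lemma hom_out: "x \<in> hom_Kr r V E \<Longrightarrow> r \<le> i \<Longrightarrow> x i = {}"
  unfolding hom_Kr_def by auto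

lemma max_idx:
  fixes x :: "nat \<Rightarrow> nat set"
  assumes "0 < r"
  shows "\<exists>j<r. \<forall>i<r. card (x i) \<le> card (x j)"
proof -
  have "finite ((\<lambda>i. card (x i)) ` {..<r})" "(\<lambda>i. card (x i)) ` {..<r} \<noteq> {}" using assms by auto
  then have "Max ((\<lambda>i. card (x i)) ` {..<r}) \<in> (\<lambda>i. card (x i)) ` {..<r}" by (rule Max_in)
  then obtain j where j: "j < r" "card (x j) = Max ((\<lambda>i. card (x i)) ` {..<r})" by auto
  show ?thesis using j by (intro exI[of _ j]) auto
qed

lemma sum_split_j:
  fixes j r :: nat
  assumes "j < r"
  shows "(\<Sum>i<r. f i) = f j + (\<Sum>i\<in>{i. i<r \<and> i\<noteq>j}. f i)"
proof -
  have "{..<r} = insert j {i. i<r \<and> i\<noteq>j}" using assms by auto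
  moreover have "sum f (insert j {i. i<r \<and> i\<noteq>j}) = f j + sum f {i. i<r \<and> i\<noteq>j}"
    by (rule sum.insert) (auto intro: finite_subset[of _ "{..<r}"])
  ultimately show ?thesis by simp
qed

lemma good_small:
  assumes "good r T n E" "x \<in> hom_Kr r {1..n} E" "0 < r" "\<forall>i<r. card (x i) < T"
  shows "psum r x < 2 * T"
proof -
  obtain j where j: "j < r" "\<forall>i<r. card (x i) \<le> card (x j)" using max_idx[OF assms(3)] by blast
  have "(\<Sum>i\<in>{i. i<r \<and> i\<noteq>j}. card (x i)) < T" using assms(1,2) j unfolding good_def by blast
  moreover have "card (x j) < T" using assms(4) j by auto
  ultimately show ?thesis unfolding psum_def using sum_split_j[OF j(1), of "\<lambda>i. card (x i)"] by linarith
qed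

lemma good_unique:
  assumes "good r T n E" "x \<in> hom_Kr r {1..n} E" "0 < r"
    and "i < r" "T \<le> card (x i)" "i' < r" "T \<le> card (x i')"
  shows "i = i'"
proof -
  obtain j where j: "j < r" "\<forall>i<r. card (x i) \<le> card (x j)" using max_idx[OF assms(3)] by blast
  have lt: "(\<Sum>i\<in>{i. i<r \<and> i\<noteq>j}. card (x i)) < T" using assms(1,2) j unfolding good_def by blast
  have fin: "finite {i. i<r \<and> i\<noteq>j}" by auto
  have "i = j"
  proof (rule ccontr)
    assume "i \<noteq> j"
    then have "i \<in> {i. i<r \<and> i\<noteq>j}" using assms by auto
    then have "card (x i) \<le> (\<Sum>i\<in>{i. i<r \<and> i\<noteq>j}. card (x i))"
      using member_le_sum[OF _ _ fin, of i "\<lambda>i. card (x i)"] by auto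
    then show False using lt assms by linarith
  qed
  moreover have "i' = j"
  proof (rule ccontr)
    assume "i' \<noteq> j"
    then have "i' \<in> {i. i<r \<and> i\<noteq>j}" using assms by auto
    then have "card (x i') \<le> (\<Sum>i\<in>{i. i<r \<and> i\<noteq>j}. card (x i))"
      using member_le_sum[OF _ _ fin, of i' "\<lambda>i. card (x i)"] by auto
    then show False using lt assms by linarith
  qed
  ultimately show ?thesis by simp
qed

lemma mod2: "(x::nat) < 2*r \<Longrightarrow> x mod r = (if x < r then x else x - r)"
  by (simp add: le_mod_geq)

lemma inj_shift: "(a::nat) < r \<Longrightarrow> b < r \<Longrightarrow> (a + k) mod r = (b + k) mod r \<Longrightarrow> a = b"
proof -
  assume h: "a < r" "b < r" "(a + k) mod r = (b + k) mod r"
  have k0: "k mod r < r" using h by simp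
  have "(a + k mod r) mod r = (b + k mod r) mod r" using h(3) by (simp add: mod_add_right_eq)
  then show "a = b" using mod2[of "a + k mod r" r] mod2[of "b + k mod r" r] h k0
    by (auto split: if_splits)
qed

lemma mod_shift_ne:
  fixes j k r :: nat
  assumes "j < r" "1 \<le> k" "k < r"
  shows "(j + k) mod r \<noteq> j"
  using mod2[of "j+k" r] assms by auto

lemma shift_bij:
  fixes k r :: nat
  assumes "0 < r"
  shows "bij_betw (\<lambda>i. (i + k) mod r) {..<r} {..<r}"
proof -
  have "inj_on (\<lambda>i. (i + k) mod r) {..<r}"
    by (rule inj_onI) (use inj_shift in auto)
  moreover have "(\<lambda>i. (i + k) mod r) ` {..<r} \<subseteq> {..<r}" using assms by auto
  ultimately show ?thesis
    by (simp add: bij_betw_def endo_inj_surj)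
qed

lemma psum_shift:
  assumes "0 < r"
  shows "psum r (cshift r k v) = psum r v"
proof -
  have "psum r (cshift r k v) = (\<Sum>i<r. card (v ((i + k) mod r)))"
    unfolding psum_def cshift_def by simp
  also have "\<dots> = (\<Sum>i<r. card (v i))"
    using sum.reindex_bij_betw[OF shift_bij[OF assms, of k], of "\<lambda>i. card (v i)"] by simp
  finally show ?thesis unfolding psum_def .
qed

lemma unshift:
  assumes "\<forall>i. r \<le> i \<longrightarrow> v i = {}" "k \<le> r" "0 < r"
  shows "cshift r (r - k) (cshift r k v) = v"
proof
  fix i
  show "cshift r (r - k) (cshift r k v) i = v i"
  proof (cases "i < r")
    case True
    have "((i + (r - k)) mod r + k) mod r = (i + (r - k) + k) mod r" by (simp add: mod_add_left_eq)
    also have "\<dots> = (i + r) mod r" using assms by simp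
    also have "\<dots> = i" using True by simp
    finally show ?thesis using True assms unfolding cshift_def by simp
  next
    case False then show ?thesis using assms unfolding cshift_def by simp
  qed
qed

lemma strict_psum:
  assumes "hom_le r u w" "u \<noteq> w" "\<forall>i. r \<le> i \<longrightarrow> u i = {}" "\<forall>i. r \<le> i \<longrightarrow> w i = {}"
    "\<forall>i<r. finite (w i)"
  shows "psum r u < psum r w"
proof -
  obtain i where i: "u i \<noteq> w i" using assms(2) by (meson ext)
  then have ir: "i < r" using assms(3,4) by (metis not_le)
  have "u i \<subset> w i" using i ir assms(1) unfolding hom_le_def by auto
  then have "card (u i) < card (w i)" using assms(5) ir by (simp add: psubset_card_mono)
  moreover have "\<forall>i\<in>{..<r}. card (u i) \<le> card (w i)"
    using assms(1,5) unfolding hom_le_def by (auto intro: card_mono)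
  ultimately show ?thesis unfolding psum_def using ir
    by (intro sum_strict_mono_ex1) auto
qed

lemma mod_back: "(j::nat) < r \<Longrightarrow> k \<le> r \<Longrightarrow> ((j + (r - k)) mod r + k) mod r = j"
proof -
  assume a: "j < r" "k \<le> r"
  have "((j + (r - k)) mod r + k) mod r = (j + (r - k) + k) mod r" by (simp add: mod_add_left_eq)
  also have "\<dots> = (j + r) mod r" using a by simp
  also have "\<dots> = j" using a by simp
  finally show ?thesis .
qed

definition col :: "nat \<Rightarrow> nat \<Rightarrow> (nat \<Rightarrow> nat set) \<Rightarrow> nat" where
  "col r T x = (if \<forall>i<r. card (x i) < T then psum r x else 2*T + (SOME j. j<r \<and> T \<le> card (x j)))"

lemma col_large:
  assumes "\<not> (\<forall>i<r. card (x i) < T)"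
  shows "col r T x = 2*T + (SOME j. j<r \<and> T \<le> card (x j))"
    "(SOME j. j<r \<and> T \<le> card (x j)) < r" "T \<le> card (x (SOME j. j<r \<and> T \<le> card (x j)))"
proof -
  have ex: "\<exists>j. j<r \<and> T \<le> card (x j)" using assms by (auto simp: not_less)
  show "col r T x = 2*T + (SOME j. j<r \<and> T \<le> card (x j))" using assms unfolding col_def by (simp only: if_False)
  show "(SOME j. j<r \<and> T \<le> card (x j)) < r" "T \<le> card (x (SOME j. j<r \<and> T \<le> card (x j)))"
    using someI_ex[OF ex] by auto
qed

lemma chrom_bound:
  assumes g: "good r T n E" and r0: "0 < r"
  shows "chromatic_number (hom_Kr r {1..n} E) (strong_compat r) \<le> 2*T + r"
  unfolding chromatic_number_def
proof (rule Least_le, rule exI[of _ "col r T"], intro conjI ballI impI)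
  let ?V = "hom_Kr r {1..n} E"
  fix v assume v: "v \<in> ?V"
  show "col r T v < 2*T + r"
  proof (cases "\<forall>i<r. card (v i) < T")
    case True
    then show ?thesis using good_small[OF g v r0] unfolding col_def by simp
  next
    case False
    then show ?thesis using col_large[OF False] by simp
  qed
next
  let ?V = "hom_Kr r {1..n} E"
  fix u v assume u: "u \<in> ?V" and v: "v \<in> ?V" and adj: "strong_compat r u v"
  obtain k where k: "1 \<le> k" "k < r" and cmp: "hom_le r u (cshift r k v) \<or> hom_le r (cshift r k v) u"
    and no: "v \<notin> orbit r u"
    using adj unfolding strong_compat_def by blast
  define w where "w = cshift r k v"
  have wout: "\<forall>i. r \<le> i \<longrightarrow> w i = {}" unfolding w_def cshift_def by simp
  have wi: "\<And>i. i < r \<Longrightarrow> w i = v ((i + k) mod r)" unfolding w_def cshift_def by simp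
  have vfin: "\<And>i. i < r \<Longrightarrow> finite (v i)" using hom_sub[OF v] finite_subset by blast
  have ufin: "\<And>i. i < r \<Longrightarrow> finite (u i)" using hom_sub[OF u] finite_subset by blast
  have wfin: "\<forall>i<r. finite (w i)" using wi vfin r0 by simp
  have uout: "\<forall>i. r \<le> i \<longrightarrow> u i = {}" using hom_out[OF u] by blast
  have vout: "\<forall>i. r \<le> i \<longrightarrow> v i = {}" using hom_out[OF v] by blast
  have uw: "u \<noteq> w"
  proof
    assume "u = w"
    then have "cshift r (r - k) u = v" unfolding w_def using unshift[OF vout _ r0, of k] k by simp
    moreover have "r - k < r" using k by simp
    ultimately have "v \<in> orbit r u" unfolding orbit_def by blast
    then show False using no by simp
  qed
  have cmp': "hom_le r u w \<or> hom_le r w u" using cmp unfolding w_def .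
  show "col r T u \<noteq> col r T v"
  proof (cases "\<forall>i<r. card (u i) < T")
    case Tu: True
    show ?thesis
    proof (cases "\<forall>i<r. card (v i) < T")
      case Tv: True
      have "psum r w = psum r v" unfolding w_def using psum_shift[OF r0] .
      moreover have "psum r u \<noteq> psum r w"
        using cmp' strict_psum[OF _ uw uout wout wfin] strict_psum[OF _ uw[symmetric] wout uout] ufin
        by fastforce
      ultimately show ?thesis using Tu Tv unfolding col_def by simp
    next
      case Fv: False
      then show ?thesis using Tu col_large[OF Fv] good_small[OF g u r0] unfolding col_def by simp
    qed
  next
    case Fu: False
    show ?thesis
    proof (cases "\<forall>i<r. card (v i) < T")
      case Tv: True
      then show ?thesis using Fu col_large[OF Fu] good_small[OF g v r0] unfolding col_def by simp
    next
      case Fv: False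
      show ?thesis
      proof
        assume eq: "col r T u = col r T v"
        define j where "j = (SOME j. j<r \<and> T \<le> card (u j))"
        have j: "j < r" "T \<le> card (u j)" using col_large[OF Fu] unfolding j_def by auto
        have jv: "(SOME j. j<r \<and> T \<le> card (v j)) = j" using eq col_large[OF Fu] col_large[OF Fv]
          unfolding j_def by simp
        have vj: "T \<le> card (v j)" using col_large(3)[OF Fv] jv by simp
        show False
          using cmp'
        proof
          assume le: "hom_le r u w"
          have "u j \<subseteq> v ((j + k) mod r)" using le j wi unfolding hom_le_def by auto
          moreover have "(j + k) mod r < r" using r0 by simp
          ultimately have "T \<le> card (v ((j + k) mod r))"
            using j vfin card_mono by (meson le_trans)
          then have "(j + k) mod r = j" using good_unique[OF g v r0 _ _ j(1) vj] r0 by simp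
          then show False using mod_shift_ne[OF j(1) k] by simp
        next
          assume le: "hom_le r w u"
          define i where "i = (j + (r - k)) mod r"
          have ir: "i < r" unfolding i_def using r0 by simp
          have "w i = v j" using wi[OF ir] mod_back[OF j(1), of k] k unfolding i_def by simp
          then have "v j \<subseteq> u i" using le ir unfolding hom_le_def by auto
          then have "T \<le> card (u i)" using vj ufin[OF ir] card_mono by (meson le_trans)
          then have "i = j" using good_unique[OF g u r0 ir _ j] by simp
          moreover have "1 \<le> r - k" "r - k < r" using k by auto
          ultimately show False using mod_shift_ne[OF j(1), of "r - k"] unfolding i_def by blast
        qed
      qed
    qed
  qed
qed



definition cross :: "nat \<Rightarrow> (nat \<Rightarrow> nat set) \<Rightarrow> nat set set" where
  "cross r w = {{a,b} | a b. \<exists>i<r. \<exists>i'<r. i \<noteq> i' \<and> a \<in> w i \<and> b \<in> w i'}"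

definition Wit :: "nat \<Rightarrow> nat \<Rightarrow> nat \<Rightarrow> (nat \<Rightarrow> nat set) set" where
  "Wit r n T = {w. (\<forall>i. r \<le> i \<longrightarrow> w i = {}) \<and> (\<forall>i<r. w i \<subseteq> {1..n}) \<and>
     (\<forall>i<r. \<forall>i'<r. i \<noteq> i' \<longrightarrow> w i \<inter> w i' = {}) \<and> T \<le> psum r w \<and> psum r w \<le> 2*T \<and>
     psum r w * T \<le> 2 * card (cross r w)}"

lemma GL:
  assumes fin: "\<forall>i<r. finite (w i)"
    and dis: "\<forall>i<r. \<forall>i'<r. i \<noteq> i' \<longrightarrow> w i \<inter> w i' = {}"
    and m: "\<forall>i<r. card (w i) \<le> m"
  shows "psum r w * (psum r w - m) \<le> 2 * card (cross r w)"
proof -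
  define s where "s = psum r w"
  define U where "U = (\<Union>i<r. w i)"
  have finU: "finite U" unfolding U_def using fin by auto
  have cU: "card U = s" unfolding U_def s_def psum_def
    by (rule card_UN_disjoint) (use fin dis in auto)
  define Op where "Op = (\<Union>i<r. w i \<times> (U - w i))"
  have cO: "card Op = (\<Sum>i<r. card (w i) * (s - card (w i)))"
  proof -
    have "card Op = (\<Sum>i<r. card (w i \<times> (U - w i)))" unfolding Op_def
      by (rule card_UN_disjoint) (use fin finU dis in auto)
    also have "\<dots> = (\<Sum>i<r. card (w i) * (s - card (w i)))"
    proof (rule sum.cong)
      fix i assume "i \<in> {..<r}"
      then have "w i \<subseteq> U" "finite (w i)" unfolding U_def using fin by auto
      then show "card (w i \<times> (U - w i)) = card (w i) * (s - card (w i))"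
        using cU by (simp add: card_cartesian_product card_Diff_subset)
    qed simp
    finally show ?thesis .
  qed
  have "s * (s - m) = (\<Sum>i<r. card (w i) * (s - m))" unfolding s_def psum_def by (simp add: sum_distrib_right)
  also have "\<dots> \<le> (\<Sum>i<r. card (w i) * (s - card (w i)))"
    by (rule sum_mono) (use m in \<open>auto intro: mult_le_mono2 diff_le_mono2\<close>)
  finally have sO: "s * (s - m) \<le> card Op" using cO by simp
  define f where "f = (\<lambda>(a::nat,b::nat). {a,b})"
  have Oc: "\<And>a b. (a,b) \<in> Op \<Longrightarrow> {a,b} \<in> cross r w \<and> a \<noteq> b"
  proof -
    fix a b assume "(a,b) \<in> Op"
    then obtain i where i: "i < r" "a \<in> w i" "b \<in> U" "b \<notin> w i" unfolding Op_def by auto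
    then obtain i' where i': "i' < r" "b \<in> w i'" unfolding U_def by auto
    then have "i \<noteq> i'" using i by auto
    then show "{a,b} \<in> cross r w \<and> a \<noteq> b" using i i' unfolding cross_def by blast
  qed
  have fincross: "finite (cross r w)"
  proof -
    have "cross r w \<subseteq> f ` (U \<times> U)" unfolding cross_def f_def U_def by auto
    then show ?thesis using finU finite_subset by blast
  qed
  define Ol where "Ol = {p\<in>Op. fst p < snd p}"
  define Og where "Og = {p\<in>Op. snd p < fst p}"
  have "Op \<subseteq> Ol \<union> Og" unfolding Ol_def Og_def using Oc by fastforce
  moreover have "finite Op" unfolding Op_def using finU fin by auto
  ultimately have "card Op \<le> card (Ol \<union> Og)"
    by (intro card_mono) (auto simp: Ol_def Og_def)
  also have "\<dots> \<le> card Ol + card Og" by (rule card_Un_le)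
  also have "card Ol \<le> card (cross r w)"
  proof (rule card_inj_on_le[of f])
    show "inj_on f Ol" unfolding inj_on_def Ol_def f_def by (auto simp: doubleton_eq_iff)
    show "f ` Ol \<subseteq> cross r w" unfolding Ol_def f_def using Oc by auto
  qed (rule fincross)
  also have "card Og \<le> card (cross r w)"
  proof (rule card_inj_on_le[of f])
    show "inj_on f Og" unfolding inj_on_def Og_def f_def by (auto simp: doubleton_eq_iff)
    show "f ` Og \<subseteq> cross r w" unfolding Og_def f_def using Oc by auto
  qed (rule fincross)
  finally show ?thesis using sO unfolding s_def by linarith
qed

lemma hom_disj:
  assumes "x \<in> hom_Kr r {1..n} E" "E \<subseteq> vertex_pairs n" "i < r" "i' < r" "i \<noteq> i'"
  shows "x i \<inter> x i' = {}"
proof (rule ccontr)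
  assume "x i \<inter> x i' \<noteq> {}"
  then obtain a where "a \<in> x i" "a \<in> x i'" by auto
  then have "{a, a} \<in> E" using assms(1,3-5) unfolding hom_Kr_def by blast
  then have "{a} \<in> vertex_pairs n" using assms(2) by auto
  then show False unfolding vertex_pairs_def by (auto simp: doubleton_eq_iff)
qed

lemma shrink:
  assumes E: "E \<subseteq> vertex_pairs n" and ng: "\<not> good r T n E"
  shows "\<exists>w\<in>Wit r n T. cross r w \<subseteq> E"
proof -
  obtain x j where x: "x \<in> hom_Kr r {1..n} E" and j: "j < r" "\<forall>i<r. card (x i) \<le> card (x j)"
    and big: "T \<le> (\<Sum>i\<in>{i. i<r \<and> i\<noteq>j}. card (x i))"
    using ng unfolding good_def by (auto simp: not_less)
  define I where "I = {i. i<r \<and> i\<noteq>j}"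
  have finI: "finite I" unfolding I_def by (auto intro: finite_subset[of _ "{..<r}"])
  have xfin: "\<And>i. i < r \<Longrightarrow> finite (x i)" using hom_sub[OF x] finite_subset by blast
  define S0 where "S0 = (SIGMA i:I. x i)"
  have "card S0 = (\<Sum>i\<in>I. card (x i))" unfolding S0_def
    by (rule card_SigmaI) (use finI xfin in \<open>auto simp: I_def\<close>)
  then have "T \<le> card S0" using big unfolding I_def by simp
  then obtain S' where S': "S' \<subseteq> S0" "card S' = T" "finite S'" by (rule obtain_subset_with_card_n)
  have "min (card (x j)) T \<le> card (x j)" by simp
  then obtain B where B: "B \<subseteq> x j" "card B = min (card (x j)) T" "finite B" by (rule obtain_subset_with_card_n)
  define w where "w = (\<lambda>i. if i \<in> I then {a. (i,a) \<in> S'} else if i = j then B else {})"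
  have wj: "w j = B" unfolding w_def I_def by simp
  have wsub: "\<And>i. i < r \<Longrightarrow> w i \<subseteq> x i" using S'(1) B(1) unfolding w_def S0_def by auto
  have wout: "\<forall>i. r \<le> i \<longrightarrow> w i = {}" unfolding w_def I_def using j(1) by auto
  have wfin: "\<forall>i<r. finite (w i)" using wsub xfin finite_subset by blast
  have SigI: "(SIGMA i:I. w i) = S'" using S'(1) unfolding w_def S0_def by auto
  have sumI: "(\<Sum>i\<in>I. card (w i)) = T"
  proof -
    have "card (SIGMA i:I. w i) = (\<Sum>i\<in>I. card (w i))"
      by (rule card_SigmaI) (use finI wfin in \<open>auto simp: I_def\<close>)
    then show ?thesis using SigI S'(2) by simp
  qed
  have ps: "psum r w = card B + T"
    unfolding psum_def using sum_split_j[OF j(1), of "\<lambda>i. card (w i)"] sumI wj unfolding I_def by simp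
  have mb: "\<forall>i<r. card (w i) \<le> card B"
  proof (intro allI impI)
    fix i assume ir: "i < r"
    show "card (w i) \<le> card B"
    proof (cases "i = j")
      case True then show ?thesis using wj by simp
    next
      case False
      then have iI: "i \<in> I" unfolding I_def using ir by simp
      have "card (w i) \<le> card (x i)" using wsub[OF ir] xfin[OF ir] card_mono by blast
      then have "card (w i) \<le> card (x j)" using j ir by (meson le_trans)
      moreover have "card (w i) \<le> T" using member_le_sum[OF iI _ finI, of "\<lambda>i. card (w i)"] sumI by simp
      ultimately show ?thesis using B(2) by simp
    qed
  qed
  have dis: "\<forall>i<r. \<forall>i'<r. i \<noteq> i' \<longrightarrow> w i \<inter> w i' = {}"
    using hom_disj[OF x E] wsub by blast
  have gl: "psum r w * (psum r w - card B) \<le> 2 * card (cross r w)"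
    by (rule GL[OF wfin dis mb])
  have BT: "card B \<le> T" using B(2) by simp
  have "w \<in> Wit r n T"
    unfolding Wit_def using wout wsub hom_sub[OF x] dis gl ps BT by fastforce
  moreover have "cross r w \<subseteq> E"
  proof
    fix e assume "e \<in> cross r w"
    then obtain a b i i' where e: "e = {a,b}" "i < r" "i' < r" "i \<noteq> i'" "a \<in> w i" "b \<in> w i'"
      unfolding cross_def by blast
    then have "a \<in> x i" "b \<in> x i'" using wsub by auto
    then show "e \<in> E" using x e unfolding hom_Kr_def by blast
  qed
  ultimately show ?thesis by blast
qed



lemma finite_vp: "finite (vertex_pairs n)"
proof -
  have "vertex_pairs n \<subseteq> Pow {1..n}" unfolding vertex_pairs_def by auto
  then show ?thesis using finite_subset by blast
qed

lemma card_supsets: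
  assumes "finite V" "F \<subseteq> V"
  shows "card {E. E \<subseteq> V \<and> F \<subseteq> E} = 2 ^ (card V - card F)"
proof -
  have "bij_betw (\<lambda>E. E - F) {E. E \<subseteq> V \<and> F \<subseteq> E} (Pow (V - F))"
    by (rule bij_betw_byWitness[where f' = "\<lambda>S. S \<union> F"]) (use assms in auto)
  then have "card {E. E \<subseteq> V \<and> F \<subseteq> E} = card (Pow (V - F))" by (rule bij_betw_same_card)
  also have "\<dots> = 2 ^ (card V - card F)"
    using assms by (simp add: card_Pow card_Diff_subset finite_subset)
  finally show ?thesis .
qed

lemma cross_sub:
  assumes "w \<in> Wit r n T"
  shows "cross r w \<subseteq> vertex_pairs n"
proof
  fix e assume "e \<in> cross r w"
  then obtain a b i i' where e: "e = {a,b}" "i < r" "i' < r" "i \<noteq> i'" "a \<in> w i" "b \<in> w i'"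
    unfolding cross_def by blast
  have "w i \<inter> w i' = {}" "w i \<subseteq> {1..n}" "w i' \<subseteq> {1..n}" using assms e unfolding Wit_def by auto
  then show "e \<in> vertex_pairs n" using e unfolding vertex_pairs_def by blast
qed

definition enc :: "nat \<Rightarrow> (nat \<Rightarrow> nat set) \<Rightarrow> (nat \<times> nat) set" where
  "enc r w = (SIGMA i:{..<r}. w i)"

lemma enc_inj: "inj_on (enc r) (Wit r n T)"
proof (rule inj_onI)
  fix w w' assume w: "w \<in> Wit r n T" and w': "w' \<in> Wit r n T" and eq: "enc r w = enc r w'"
  show "w = w'"
  proof
    fix i
    show "w i = w' i"
    proof (cases "i < r")
      case True
      have "w i = {a. (i,a) \<in> enc r w}" "w' i = {a. (i,a) \<in> enc r w'}" using True unfolding enc_def by auto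
      then show ?thesis using eq by simp
    next
      case False then show ?thesis using w w' unfolding Wit_def by auto
    qed
  qed
qed

lemma enc_props:
  assumes "w \<in> Wit r n T"
  shows "enc r w \<subseteq> {..<r} \<times> {1..n}" "card (enc r w) = psum r w"
proof -
  show "enc r w \<subseteq> {..<r} \<times> {1..n}" using assms unfolding enc_def Wit_def by auto
  have "\<forall>i\<in>{..<r}. finite (w i)" using assms unfolding Wit_def by (auto intro: finite_subset)
  then show "card (enc r w) = psum r w" unfolding enc_def psum_def by simp
qed

lemma finite_Wit: "finite (Wit r n T)"
proof (rule finite_imageD[OF _ enc_inj])
  have "enc r ` Wit r n T \<subseteq> Pow ({..<r} \<times> {1..n})" using enc_props by blast
  then show "finite (enc r ` Wit r n T)" using finite_subset by blast
qed

lemma count_Wit: "card {w \<in> Wit r n T. psum r w = y} \<le> (r * n) choose y"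
proof -
  have "card {w \<in> Wit r n T. psum r w = y} \<le> card {S. S \<subseteq> {..<r} \<times> {1..n} \<and> card S = y}"
  proof (rule card_inj_on_le[of "enc r"])
    show "inj_on (enc r) {w \<in> Wit r n T. psum r w = y}" using enc_inj by (rule inj_on_subset) auto
    show "enc r ` {w \<in> Wit r n T. psum r w = y} \<subseteq> {S. S \<subseteq> {..<r} \<times> {1..n} \<and> card S = y}"
      using enc_props[of _ r n T] by blast
    show "finite {S. S \<subseteq> {..<r} \<times> {1..n} \<and> card S = y}" by simp
  qed
  also have "\<dots> = (r * n) choose y" by (simp add: n_subsets card_cartesian_product)
  finally show ?thesis .
qed

lemma half_pow_le:
  assumes "s * T \<le> 2 * c"
  shows "(1/2::real) ^ c \<le> ((1/2) powr (real T / 2)) ^ s"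
proof -
  have "(1/2::real) ^ c = (1/2) powr (real c)" by (simp add: powr_realpow)
  also have "\<dots> \<le> (1/2) powr (real s * (real T / 2))"
  proof (rule powr_mono')
    have "real (s * T) \<le> real (2 * c)" using assms by linarith
    then show "real s * (real T / 2) \<le> real c" by simp
  qed auto
  also have "\<dots> = ((1/2) powr (real T / 2)) ^ s" by (simp add: powr_power)
  finally show ?thesis .
qed

lemma prob_bad:
  assumes T1: "1 \<le> T" and qdef: "q = (1/2::real) powr (real T / 2)" and Nq: "real (r*n) * q \<le> 1"
  shows "measure_pmf.prob (gnp_half n) {E. \<not> good r T n E} \<le> (real T + 1) * (real (r*n) * q)"
proof -
  define V where "V = vertex_pairs n"
  define G where "G = all_graphs n"
  have finV: "finite V" unfolding V_def by (rule finite_vp)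
  have GV: "G = Pow V" unfolding G_def V_def all_graphs_def by simp
  have finG: "finite G" "G \<noteq> {}" using finV GV by auto
  have cG: "card G = 2 ^ card V" using GV finV by (simp add: card_Pow)
  have q0: "0 \<le> q" unfolding qdef by simp
  let ?W = "Wit r n T"
  have sub: "G \<inter> {E. \<not> good r T n E} \<subseteq> (\<Union>w\<in>?W. {E. E \<subseteq> V \<and> cross r w \<subseteq> E})"
    using shrink unfolding GV V_def by fastforce
  have "card (G \<inter> {E. \<not> good r T n E}) \<le> card (\<Union>w\<in>?W. {E. E \<subseteq> V \<and> cross r w \<subseteq> E})"
    by (rule card_mono[OF _ sub]) (use finite_Wit finV in auto)
  also have "\<dots> \<le> (\<Sum>w\<in>?W. card {E. E \<subseteq> V \<and> cross r w \<subseteq> E})"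
    by (rule card_UN_le[OF finite_Wit])
  also have "\<dots> = (\<Sum>w\<in>?W. 2 ^ (card V - card (cross r w)))"
    by (rule sum.cong) (use card_supsets[OF finV] cross_sub[of _ r n T] in \<open>auto simp: V_def\<close>)
  finally have c0: "card (G \<inter> {E. \<not> good r T n E}) \<le> (\<Sum>w\<in>?W. 2 ^ (card V - card (cross r w)))" .
  have c1: "real (card (G \<inter> {E. \<not> good r T n E})) \<le> (\<Sum>w\<in>?W. (2::real) ^ (card V - card (cross r w)))"
  proof -
    have "real (card (G \<inter> {E. \<not> good r T n E})) \<le> real (\<Sum>w\<in>?W. 2 ^ (card V - card (cross r w)))"
      using c0 by linarith
    also have "\<dots> = (\<Sum>w\<in>?W. (2::real) ^ (card V - card (cross r w)))" by simp
    finally show ?thesis .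
  qed
  have "measure_pmf.prob (gnp_half n) {E. \<not> good r T n E} = real (card (G \<inter> {E. \<not> good r T n E})) / real (card G)"
    unfolding gnp_half_def G_def using finG unfolding G_def by (simp add: measure_pmf_of_set)
  also have "\<dots> \<le> (\<Sum>w\<in>?W. (2::real) ^ (card V - card (cross r w))) / 2 ^ card V"
    using c1 cG by (simp add: divide_right_mono)
  also have "\<dots> = (\<Sum>w\<in>?W. (1/2::real) ^ card (cross r w))"
    unfolding sum_divide_distrib
  proof (rule sum.cong)
    fix w assume w: "w \<in> ?W"
    have "card (cross r w) \<le> card V" using cross_sub[OF w] finV unfolding V_def by (simp add: card_mono)
    then have "(2::real) ^ card V = 2 ^ (card V - card (cross r w)) * 2 ^ card (cross r w)"
      by (simp add: power_add[symmetric])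
    then show "(2::real) ^ (card V - card (cross r w)) / 2 ^ card V = (1/2) ^ card (cross r w)"
      by (simp add: power_one_over)
  qed simp
  also have "\<dots> \<le> (\<Sum>w\<in>?W. q ^ psum r w)"
    by (rule sum_mono) (use half_pow_le qdef in \<open>auto simp: Wit_def\<close>)
  also have "\<dots> = (\<Sum>y\<in>psum r ` ?W. (\<Sum>w\<in>{w\<in>?W. psum r w = y}. q ^ psum r w))"
    by (rule sum.image_gen[OF finite_Wit])
  also have "\<dots> = (\<Sum>y\<in>psum r ` ?W. real (card {w\<in>?W. psum r w = y}) * q ^ y)"
    by (rule sum.cong) auto
  also have "\<dots> \<le> (\<Sum>y\<in>psum r ` ?W. real ((r*n) choose y) * q ^ y)"
    by (rule sum_mono) (use count_Wit q0 in \<open>auto intro: mult_right_mono\<close>)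
  also have "\<dots> \<le> (\<Sum>y\<in>{T..2*T}. real ((r*n) choose y) * q ^ y)"
    by (rule sum_mono2) (use q0 in \<open>auto simp: Wit_def\<close>)
  also have "\<dots> \<le> (\<Sum>y\<in>{T..2*T}. real (r*n) * q)"
  proof (rule sum_mono)
    fix y assume y: "y \<in> {T..2*T}"
    have "real ((r*n) choose y) \<le> real (r*n) ^ y"
    proof (cases "y \<le> r*n")
      case True then show ?thesis using binomial_le_pow[OF True] by (metis of_nat_le_iff of_nat_power)
    next
      case False then have "(r*n) choose y = 0" by (simp add: binomial_eq_0)
      then show ?thesis by (metis of_nat_0 of_nat_0_le_iff zero_le_power)
    qed
    then have "real ((r*n) choose y) * q ^ y \<le> real (r*n) ^ y * q ^ y" using q0 by (simp add: mult_right_mono)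
    also have "\<dots> = (real (r*n) * q) ^ y" by (simp add: power_mult_distrib)
    also have "\<dots> \<le> (real (r*n) * q) ^ 1"
      by (rule power_decreasing) (use y T1 Nq q0 in auto)
    finally show "real ((r*n) choose y) * q ^ y \<le> real (r*n) * q" by simp
  qed
  also have "\<dots> = (real T + 1) * (real (r*n) * q)" by simp
  finally show ?thesis .
qed



lemma four_le: "2 \<le> r \<Longrightarrow> 4 \<le> real r + 2 / (real r - 1)"
proof -
  assume r: "2 \<le> r"
  consider "r = 2" | "r = 3" | "4 \<le> r" using r by linarith
  then show ?thesis
  proof cases
    case 3
    then have "0 \<le> 2 / (real r - 1)" by simp
    moreover have "4 \<le> real r" using 3 by simp
    ultimately show ?thesis by linarith
  qed simp_all
qed

lemma asy1: "0 < d \<Longrightarrow> (\<lambda>n::nat. ((2+d) * log 2 (real n) + 2) * real r * real n powr (-d/2)) \<longlonglongrightarrow> 0"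
  by real_asymp

lemma asy2: "0 < d \<Longrightarrow> eventually (\<lambda>n::nat. real r * real n powr (-d/2) \<le> 1) sequentially"
  by real_asymp

lemma asy3: "0 < e \<Longrightarrow> eventually (\<lambda>n::nat. 2 + real r \<le> e * log 2 (real n)) sequentially"
  by real_asymp

lemma q_bound:
  assumes n: "2 \<le> n" and d: "0 < d" and T: "(2+d) * log 2 (real n) \<le> real T"
  shows "(1/2::real) powr (real T / 2) \<le> real n powr (-(1 + d/2))"
proof -
  have "(1/2::real) powr (real T / 2) \<le> (1/2) powr ((2+d) * log 2 (real n) / 2)"
    by (rule powr_mono') (use T in auto)
  also have "\<dots> = inverse (2 powr ((1 + d/2) * log 2 (real n)))"
    by (simp add: powr_divide field_simps)
  also have "2 powr ((1 + d/2) * log 2 (real n)) = (2 powr log 2 (real n)) powr (1 + d/2)"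
    by (simp add: powr_powr mult.commute)
  also have "\<dots> = real n powr (1 + d/2)" using n by simp
  finally have "(1/2::real) powr (real T / 2) \<le> inverse (real n powr (1 + d/2))" .
  moreover have "real n powr (-(1 + d/2)) = inverse (real n powr (1+d/2))" by (rule powr_minus)
  ultimately show ?thesis by (simp only:)
qed



theorem theorem13:
  fixes \<epsilon> :: real and r :: nat
  assumes "\<epsilon> > 0" and "r \<ge> 2"
  shows "(\<lambda>n. measure_pmf.prob (gnp_half n)
            {E. real (chromatic_number (hom_Kr r {1..n} E) (strong_compat r))
                  \<le> (real r + 2 / (real r - 1) + \<epsilon>) * log 2 (real n)})
         \<longlonglongrightarrow> 1"
proof -
  define d where "d = \<epsilon> / 4"
  have d0: "0 < d" using assms(1) unfolding d_def by simp
  define Tn where "Tn = (\<lambda>n::nat. nat \<lceil>(2+d) * log 2 (real n)\<rceil>)"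
  define \<beta> where "\<beta> = (\<lambda>n::nat. ((2+d) * log 2 (real n) + 2) * real r * real n powr (-d/2))"
  define P where "P = (\<lambda>n. measure_pmf.prob (gnp_half n)
            {E. real (chromatic_number (hom_Kr r {1..n} E) (strong_compat r))
                  \<le> (real r + 2 / (real r - 1) + \<epsilon>) * log 2 (real n)})"
  have r0: "0 < r" using assms(2) by simp
  have e2: "0 < \<epsilon> / 2" using assms(1) by simp
  have ev: "eventually (\<lambda>n. 1 - \<beta> n \<le> P n \<and> P n \<le> 1) sequentially"
    using eventually_ge_at_top[of "2::nat"] asy2[OF d0, of r] asy3[of "\<epsilon>/2" r, OF e2]
  proof (eventually_elim)
    case (elim n)
    have n2: "2 \<le> n" and rn: "real r * real n powr (-d/2) \<le> 1"
      and big: "2 + real r \<le> \<epsilon> / 2 * log 2 (real n)" using elim by auto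
    define l where "l = log 2 (real n)"
    have l1: "1 \<le> l" unfolding l_def using n2 by simp
    define T where "T = Tn n"
    have Tl: "(2+d) * l \<le> real T" "real T \<le> (2+d) * l + 1"
    proof -
      have nn: "0 \<le> (2+d) * l" using l1 d0 by simp
      have "real T = of_int \<lceil>(2+d) * l\<rceil>" unfolding T_def Tn_def l_def using nn l_def by simp
      then show "(2+d) * l \<le> real T" "real T \<le> (2+d) * l + 1" by linarith+
    qed
    have l2: "2 * l \<le> (2+d) * l" using d0 l1 by (simp add: mult_right_mono)
    have "real 1 \<le> real T" using Tl(1) l2 l1 by linarith
    then have T1: "1 \<le> T" by (simp only: of_nat_le_iff)
    define q where "q = (1/2::real) powr (real T / 2)"
    have q0: "0 \<le> q" unfolding q_def by simp
    have qb: "q \<le> real n powr (-(1 + d/2))" unfolding q_def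
      by (rule q_bound[OF n2 d0]) (use Tl l_def in simp)
    have npow: "real n * real n powr (-(1 + d/2)) = real n powr (-d/2)"
    proof -
      have "real n * real n powr (-(1 + d/2)) = real n powr 1 * real n powr (-(1 + d/2))" using n2 by simp
      also have "\<dots> = real n powr (1 + (-(1 + d/2)))" by (rule powr_add[symmetric])
      finally show ?thesis by simp
    qed
    have Nq: "real (r*n) * q \<le> real r * real n powr (-d/2)"
    proof -
      have "real (r*n) * q \<le> real (r*n) * real n powr (-(1 + d/2))" using qb by (simp add: mult_left_mono)
      also have "\<dots> = real r * (real n * real n powr (-(1 + d/2)))" by simp
      finally show ?thesis using npow by simp
    qed
    have Nq1: "real (r*n) * q \<le> 1" using Nq rn by linarith
    have bad: "measure_pmf.prob (gnp_half n) {E. \<not> good r T n E} \<le> \<beta> n"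
    proof -
      have "measure_pmf.prob (gnp_half n) {E. \<not> good r T n E} \<le> (real T + 1) * (real (r*n) * q)"
        by (rule prob_bad[OF T1 q_def Nq1])
      also have "\<dots> \<le> ((2+d) * l + 2) * (real r * real n powr (-d/2))"
      proof (rule mult_mono)
        show "real T + 1 \<le> (2+d) * l + 2" using Tl by linarith
        show "real (r*n) * q \<le> real r * real n powr (-d/2)" by (rule Nq)
        show "0 \<le> (2+d) * l + 2" using l2 l1 by linarith
        show "0 \<le> real (r*n) * q" using q0 by simp
      qed
      also have "\<dots> = \<beta> n" unfolding \<beta>_def l_def by simp
      finally show ?thesis .
    qed
    have sub: "{E. good r T n E} \<subseteq> {E. real (chromatic_number (hom_Kr r {1..n} E) (strong_compat r))
                  \<le> (real r + 2 / (real r - 1) + \<epsilon>) * log 2 (real n)}"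
    proof safe
      fix E assume g: "good r T n E"
      have "chromatic_number (hom_Kr r {1..n} E) (strong_compat r) \<le> 2*T + r"
        by (rule chrom_bound[OF g r0])
      then have "real (chromatic_number (hom_Kr r {1..n} E) (strong_compat r)) \<le> 2 * real T + real r"
        by linarith
      also have "\<dots> \<le> 4 * l + \<epsilon> * l"
      proof -
        have "2 * ((2+d) * l) = 4 * l + \<epsilon> / 2 * l" unfolding d_def by (simp add: algebra_simps)
        moreover have "2 + real r \<le> \<epsilon> / 2 * l" using big unfolding l_def .
        ultimately show ?thesis using Tl(2) by linarith
      qed
      also have "\<dots> \<le> (real r + 2 / (real r - 1) + \<epsilon>) * l"
      proof -
        have "4 * l \<le> (real r + 2 / (real r - 1)) * l"
          by (rule mult_right_mono) (use four_le[OF assms(2)] l1 in auto)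
        moreover have "(real r + 2 / (real r - 1) + \<epsilon>) * l = (real r + 2 / (real r - 1)) * l + \<epsilon> * l"
          by (rule distrib_right)
        ultimately show ?thesis by linarith
      qed
      finally show "real (chromatic_number (hom_Kr r {1..n} E) (strong_compat r))
                  \<le> (real r + 2 / (real r - 1) + \<epsilon>) * log 2 (real n)" unfolding l_def .
    qed
    have "measure_pmf.prob (gnp_half n) {E. good r T n E} = 1 - measure_pmf.prob (gnp_half n) {E. \<not> good r T n E}"
      using measure_pmf.prob_compl[of "{E. \<not> good r T n E}" "gnp_half n"] by (simp add: Compl_eq set_diff_eq)
    moreover have "measure_pmf.prob (gnp_half n) {E. good r T n E} \<le> P n"
      unfolding P_def by (rule measure_pmf.finite_measure_mono[OF sub]) simp
    ultimately have "1 - \<beta> n \<le> P n" using bad by linarith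
    moreover have "P n \<le> 1" unfolding P_def by (rule measure_pmf.prob_le_1)
    ultimately show ?case by simp
  qed
  have lo: "(\<lambda>n. 1 - \<beta> n) \<longlonglongrightarrow> 1"
    using tendsto_diff[OF tendsto_const[of 1] asy1[OF d0, of r]] unfolding \<beta>_def by simp
  have "P \<longlonglongrightarrow> 1"
    by (rule tendsto_sandwich[OF _ _ lo tendsto_const]) (use ev in \<open>auto elim: eventually_mono\<close>)
  then show ?thesis unfolding P_def .
qed

end
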